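(* Let $\mathbb K\subset\mathbb{R}^n$ be bounded and let $f:\mathbb K\to\mathbb{R}$ be 1-Lipschitz with respect to the $\ell_\infty$-norm. Then for every $\epsilon>0$ there exist finitely many functions $f_1,\dots,f_m$ such that for all $\mathbf x\in\mathbb K$, $$\max_i f_i(\mathbf x)\le f(\mathbf x)\le\max_i f_i(\mathbf x)+\epsilon,$$ where each $f_i$ has the form $f_i(\mathbf x)=\min_{1\le j\le n}\{x_j-w^{(i)}_j,\;w^{(i)}_j-x_j\}+b_i$ for some $\mathbf w^{(i)}\in\mathbb{R}^n$ and $b_i\in\mathbb{R}$. *)

theory Defs
  imports "HOL-Analysis.Analysis"
begin

definition linf_dist :: "real ^ 'n \<Rightarrow> real ^ 'n \<Rightarrow> real" where
  "linf_dist x y = Max ((\<lambda>j. \<bar>x $ j - y $ j\<bar>) ` UNIV)"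

definition linf_1_lipschitz_on :: "(real ^ 'n) set \<Rightarrow> (real ^ 'n \<Rightarrow> real) \<Rightarrow> bool" where
  "linf_1_lipschitz_on K f \<longleftrightarrow> (\<forall>x\<in>K. \<forall>y\<in>K. \<bar>f x - f y\<bar> \<le> linf_dist x y)"

definition minpiece :: "real ^ 'n \<Rightarrow> real \<Rightarrow> real ^ 'n \<Rightarrow> real" where
  "minpiece w b x = Min ((\<lambda>j. min (x $ j - w $ j) (w $ j - x $ j)) ` UNIV) + b"

end

theory Submission
  imports Defs
begin

lemma linf_le_norm: "linf_dist (x::real^'n) y \<le> norm (x - y)"
proof -
  have "\<forall>a\<in>(\<lambda>j. \<bar>x $ j - y $ j\<bar>) ` UNIV. a \<le> norm (x - y)"
    using component_le_norm_cart[of "x - y"] by auto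
  then show ?thesis unfolding linf_dist_def by (simp add: Max_le_iff)
qed

lemma minpiece_eq: "minpiece w b x = b - linf_dist x w"
proof -
  have e: "(\<lambda>j. min (x $ j - w $ j) (w $ j - x $ j)) ` UNIV = uminus ` ((\<lambda>j. \<bar>x $ j - w $ j\<bar>) ` UNIV)"
  proof -
    have "\<And>j. min (x $ j - w $ j) (w $ j - x $ j) = - \<bar>x $ j - w $ j\<bar>" by auto
    then show ?thesis by (simp add: image_image)
  qed
  have "Min (uminus ` ((\<lambda>j. \<bar>x $ j - w $ j\<bar>) ` UNIV)) = - Max ((\<lambda>j. \<bar>x $ j - w $ j\<bar>) ` UNIV)"
  proof (rule Min_eqI)
    show "finite (uminus ` ((\<lambda>j. \<bar>x $ j - w $ j\<bar>) ` UNIV))" by simp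
    show "\<And>y. y \<in> uminus ` ((\<lambda>j. \<bar>x $ j - w $ j\<bar>) ` UNIV) \<Longrightarrow> - Max ((\<lambda>j. \<bar>x $ j - w $ j\<bar>) ` UNIV) \<le> y"
      by auto
    show "- Max ((\<lambda>j. \<bar>x $ j - w $ j\<bar>) ` UNIV) \<in> uminus ` ((\<lambda>j. \<bar>x $ j - w $ j\<bar>) ` UNIV)"
      by (intro imageI Max_in) auto
  qed
  then show ?thesis unfolding minpiece_def linf_dist_def e by simp
qed

lemma linf_sym: "linf_dist x y = linf_dist y x"
  unfolding linf_dist_def by (simp add: abs_minus_commute)

theorem lemma1:
  fixes K :: "(real ^ 'n) set" and f :: "real ^ 'n \<Rightarrow> real" and \<epsilon> :: real
  assumes "bounded K"
    and "linf_1_lipschitz_on K f"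
    and "\<epsilon> > 0"
  shows "\<exists>m::nat. \<exists>w :: nat \<Rightarrow> real ^ 'n. \<exists>b :: nat \<Rightarrow> real. m \<ge> 1 \<and>
           (\<forall>x\<in>K. (MAX i\<in>{..<m}. minpiece (w i) (b i) x) \<le> f x \<and>
                   f x \<le> (MAX i\<in>{..<m}. minpiece (w i) (b i) x) + \<epsilon>)"
proof (cases "K = {}")
  case True
  then show ?thesis by (intro exI[of _ 1]) auto
next
  case False
  have cK: "compact (closure K)" using assms(1) by (simp add: compact_closure)
  have cov: "closure K \<subseteq> (\<Union>c\<in>K. ball c (\<epsilon>/2))"
  proof
    fix z assume "z \<in> closure K"
    then obtain c where "c \<in> K" "dist c z < \<epsilon>/2" using assms(3)
      by (metis closure_approachable half_gt_zero)
    then show "z \<in> (\<Union>c\<in>K. ball c (\<epsilon>/2))" by auto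
  qed
  obtain C where C: "C \<subseteq> K" "finite C" "closure K \<subseteq> (\<Union>c\<in>C. ball c (\<epsilon>/2))"
    using compactE_image[OF cK _ cov] by blast
  obtain xs where xs: "set xs = C" using finite_list[OF C(2)] by blast
  have CK: "K \<subseteq> (\<Union>c\<in>C. ball c (\<epsilon>/2))" using C(3) closure_subset by blast
  have "C \<noteq> {}" using False CK by blast
  then have len: "length xs \<ge> 1" using xs by (cases xs) auto
  define w where "w = (\<lambda>i. xs ! i)"
  define b where "b = (\<lambda>i. f (xs ! i))"
  have wK: "\<And>i. i < length xs \<Longrightarrow> w i \<in> K" using xs C(1) w_def nth_mem by blast
  have lip: "\<And>x y. x \<in> K \<Longrightarrow> y \<in> K \<Longrightarrow> \<bar>f x - f y\<bar> \<le> linf_dist x y"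
    using assms(2) unfolding linf_1_lipschitz_on_def by blast
  show ?thesis
  proof (intro exI conjI ballI)
    show "1 \<le> length xs" by (rule len)
    fix x assume x: "x \<in> K"
    have ne: "{..<length xs} \<noteq> {}" using len by (cases xs) auto
    show "(MAX i\<in>{..<length xs}. minpiece (w i) (b i) x) \<le> f x"
    proof (subst Max_le_iff, simp, use ne in blast, clarify)
      fix i assume i: "i < length xs"
      have "\<bar>f x - f (w i)\<bar> \<le> linf_dist x (w i)" using lip[OF x wK[OF i]] .
      then show "minpiece (w i) (b i) x \<le> f x" unfolding minpiece_eq b_def w_def by linarith
    qed
    obtain c where c: "c \<in> C" "x \<in> ball c (\<epsilon>/2)" using CK x by blast
    then obtain i where i: "i < length xs" "w i = c" using xs unfolding w_def by (metis in_set_conv_nth)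
    have d: "linf_dist x (w i) < \<epsilon>/2"
      using linf_le_norm[of x c] c(2) i(2) by (simp add: dist_norm norm_minus_commute)
    have "\<bar>f x - f (w i)\<bar> \<le> linf_dist x (w i)" using lip[OF x wK[OF i(1)]] .
    then have "f x \<le> minpiece (w i) (b i) x + \<epsilon>" unfolding minpiece_eq b_def w_def using d
      unfolding w_def by linarith
    also have "minpiece (w i) (b i) x \<le> (MAX i\<in>{..<length xs}. minpiece (w i) (b i) x)"
      using i(1) by (intro Max_ge) auto
    finally show "f x \<le> (MAX i\<in>{..<length xs}. minpiece (w i) (b i) x) + \<epsilon>" by simp
  qed
qed

end
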